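(* For positive integers $m,M$ let $$S_M(m)=\sum_{r=0}^M\left(-\frac14\right)^r\frac{(2m+2r-1)!}{r!\,(m+r-1)!}\binom{m-1+M}{m-1+r}.$$ Then $$S_M(1)=\frac{(2\cdot1-3)(2\cdot2-3)\cdots(2M-3)}{M!\,2^M},\qquad S_M(m)=\frac{(2m-1)!}{(m-1)!}S_M(1),$$ and in particular $S_M(m)\neq0$ for all positive integers $m,M$. *)

theory Defs
  imports Complex_Main
begin

definition S :: "nat \<Rightarrow> nat \<Rightarrow> real" where
  "S M m = (\<Sum>r=0..M. (- 1 / 4) ^ r * fact (2*m + 2*r - 1) / (fact r * fact (m + r - 1))
              * real ((m - 1 + M) choose (m - 1 + r)))"

end

theory Submission
  imports Defs
begin

definition tt :: "nat \<Rightarrow> nat \<Rightarrow> real" where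
  "tt n r = (- 1 / 4) ^ r * fact (2*n + 2*r + 1) / (fact r * fact (n + r))"

definition FF :: "nat \<Rightarrow> nat \<Rightarrow> nat \<Rightarrow> real" where
  "FF n M r = tt n r * real ((n + M) choose (n + r))"

lemma gen_step: "\<And>q A B C x y z::real. B > 0 \<Longrightarrow> C > 0 \<Longrightarrow> y > 0 \<Longrightarrow> z > 0 \<Longrightarrow>
     2 * z * (q * (- 1/4) * (x * (2 * y) * A) / ((z * B) * (y * C))) = - x * (q * A / (B * C))"
  by (simp add: field_simps)

lemma tt_step: "2 * (real r + 1) * tt n (Suc r) = - (2 * real n + 2 * real r + 3) * tt n r"
proof -
  define A :: real where "A = fact (2*n + 2*r + 1)"
  define B :: real where "B = fact r"
  define C :: real where "C = fact (n + r)"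
  have e: "2*n + 2*Suc r + 1 = Suc (Suc (2*n + 2*r + 1))" by simp
  have f1: "fact (2*n + 2*Suc r + 1) = (2*real n + 2*real r + 3) * (2 * (real n + real r + 1)) * A"
    unfolding e A_def by (simp add: algebra_simps)
  have f2: "fact (n + Suc r) = (real n + real r + 1) * C"
    unfolding C_def by (simp add: algebra_simps)
  have f3: "fact (Suc r) = (real r + 1) * B" unfolding B_def by (simp add: algebra_simps)
  have pos: "real n + real r + 1 > 0" "real r + 1 > 0" "B > 0" "C > 0"
    unfolding B_def C_def by auto
  have t1: "tt n (Suc r) = (- 1 / 4) ^ r * (- 1/4) * ((2*real n + 2*real r + 3) * (2 * (real n + real r + 1)) * A)
        / (((real r + 1) * B) * ((real n + real r + 1) * C))"
    unfolding tt_def f1 f2 f3 power_Suc by (simp only: mult_ac)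
  have t0: "tt n r = (- 1 / 4) ^ r * A / (B * C)" unfolding tt_def A_def B_def C_def ..
  show ?thesis unfolding t1 t0 by (rule gen_step[OF pos(3) pos(4) pos(1) pos(2)])
qed

lemma binom_shift: "Suc k * (N choose Suc k) = (N - k) * (N choose k)"
  using times_binomial_minus1_eq[of "Suc k" N] binomial_absorb_comp[of N k] by simp

lemma binom_shift_real: "real (Suc k) * real (N choose Suc k) = (real N - real k) * real (N choose k)"
proof (cases "k \<le> N")
  case True
  then show ?thesis using binom_shift[of k N] by (metis of_nat_diff of_nat_mult)
next
  case False
  then show ?thesis by (simp add: binomial_eq_0)
qed

lemma term_id:
  "(2 * real M + 2) * FF n (Suc M) r - (2 * real M - 1) * FF n M r
   = (2 * real n + 2 * real (Suc r) + 1) * FF n M r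
     - (case r of 0 \<Rightarrow> 0 | Suc s \<Rightarrow> (2 * real n + 2 * real (Suc s) + 1) * FF n M s)"
proof (cases r)
  case 0
  have "real (Suc (n + M) choose n) * real (Suc M) = real (n + M choose n) * real (Suc (n+M))"
  proof -
    have "(Suc (n + M) choose n) * (Suc (n+M) - n) = Suc (n + M) * (n + M choose n)"
      using binomial_absorb_comp[of "Suc (n+M)" n] by (simp add: mult.commute)
    then have "(Suc (n + M) choose n) * Suc M = (n + M choose n) * Suc (n+M)"
      by (simp add: Suc_diff_le mult.commute)
    then show ?thesis by (metis of_nat_mult)
  qed
  then have "(2 * real M + 2) * real (Suc (n + M) choose n) = (2 * real M + 2 * real n + 2) * real (n + M choose n)"
    by (simp add: algebra_simps)
  then have "(2 * real M + 2) * (tt n 0 * real (Suc (n + M) choose n)) - (2 * real M - 1) * (tt n 0 * real (n + M choose n))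
     = (2 * real n + 2 * real (Suc 0) + 1) * (tt n 0 * real (n + M choose n))"
    by (simp add: algebra_simps)
  then show ?thesis using 0 unfolding FF_def by simp
next
  case (Suc s)
  let ?N = "n + M"
  let ?k = "n + s"
  have pascal: "real (Suc ?N choose Suc ?k) = real (?N choose Suc ?k) + real (?N choose ?k)"
    by simp
  have sh: "real (Suc ?k) * real (?N choose Suc ?k) = (real ?N - real ?k) * real (?N choose ?k)"
    by (rule binom_shift_real)
  have ts: "(2 * real n + 2 * real s + 3) * tt n s = - (2 * (real s + 1) * tt n (Suc s))"
    using tt_step[of s n] by linarith
  have lhs: "FF n (Suc M) r = tt n (Suc s) * (real (?N choose Suc ?k) + real (?N choose ?k))"
    unfolding FF_def Suc using pascal by simp
  have "(2 * real M + 2) * FF n (Suc M) r - (2 * real M - 1) * FF n M r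
      - (2 * real n + 2 * real (Suc r) + 1) * FF n M r
      = tt n (Suc s) * ((2 * real M + 2) * real (?N choose ?k)
          - 2 * (real n + real s + 1) * real (?N choose Suc ?k))"
    unfolding lhs unfolding FF_def Suc by (simp add: algebra_simps)
  also have "\<dots> = tt n (Suc s) * (2 * (real s + 1) * real (?N choose ?k))"
  proof -
    have "(2 * real M + 2) * real (?N choose ?k)
          - 2 * (real n + real s + 1) * real (?N choose Suc ?k) = 2 * (real s + 1) * real (?N choose ?k)"
      using sh by (simp add: algebra_simps)
    then show ?thesis by simp
  qed
  also have "\<dots> = - ((2 * real n + 2 * real (Suc s) + 1) * FF n M s)"
  proof -
    have "tt n (Suc s) * (2 * (real s + 1) * real (?N choose ?k))
        = (2 * (real s + 1) * tt n (Suc s)) * real (?N choose ?k)" by simp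
    also have "\<dots> = - ((2 * real n + 2 * real s + 3) * tt n s) * real (?N choose ?k)"
      using ts by simp
    finally show ?thesis unfolding FF_def by (simp add: algebra_simps)
  qed
  finally show ?thesis using Suc by simp
qed

lemma rec_sum:
  "(2 * real M + 2) * (\<Sum>r<M+2. FF n (Suc M) r) = (2 * real M - 1) * (\<Sum>r<M+2. FF n M r)"
proof -
  define H where "H r = (case r of 0 \<Rightarrow> 0 | Suc s \<Rightarrow> (2 * real n + 2 * real (Suc s) + 1) * FF n M s)" for r
  have "(2 * real M + 2) * (\<Sum>r<M+2. FF n (Suc M) r) - (2 * real M - 1) * (\<Sum>r<M+2. FF n M r)
     = (\<Sum>r<M+2. (2 * real M + 2) * FF n (Suc M) r - (2 * real M - 1) * FF n M r)"
    by (simp only: sum_distrib_left sum_subtractf)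
  also have "\<dots> = (\<Sum>r<M+2. H (Suc r) - H r)"
    using term_id unfolding H_def by (intro sum.cong) auto
  also have "\<dots> = H (M+2) - H 0" by (rule sum_lessThan_telescope)
  also have "\<dots> = 0" unfolding H_def FF_def by simp
  finally show ?thesis by simp
qed

lemma S_FF: "S M (Suc n) = (\<Sum>r<M+1. FF n M r)"
  unfolding S_def FF_def tt_def
  by (intro sum.cong) (auto simp: atLeast0AtMost lessThan_Suc_atMost[symmetric])

lemma S_FF2: "S M (Suc n) = (\<Sum>r<M+2. FF n M r)"
  unfolding S_FF by (simp add: FF_def)

definition PP :: "nat \<Rightarrow> real" where
  "PP M = (\<Prod>k=1..M. 2 * real k - 3) / (fact M * 2 ^ M)"

lemma PP_rec: "(2 * real M + 2) * PP (Suc M) = (2 * real M - 1) * PP M"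
proof -
  have "(\<Prod>k=1..Suc M. 2 * real k - 3) = (\<Prod>k=1..M. 2 * real k - 3) * (2 * real M - 1)"
    by (simp add: prod.cl_ivl_Suc algebra_simps) 
  moreover have "fact (Suc M) * 2 ^ Suc M = (2 * real M + 2) * (fact M * 2 ^ M :: real)"
    by (simp add: algebra_simps)
  moreover have "(fact M * 2 ^ M :: real) > 0" by simp
  moreover have "2 * real M + 2 > 0" by simp
  moreover have "\<And>P x c d::real. d > 0 \<Longrightarrow> c > 0 \<Longrightarrow> c * (P * x / (c * d)) = x * (P / d)"
    by (simp add: field_simps)
  ultimately show ?thesis unfolding PP_def by (simp only:)
qed

lemma main: "S M (Suc n) = fact (2*n+1) / fact n * PP M"
proof (induction M)
  case 0
  show ?case unfolding S_FF PP_def FF_def tt_def by simp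
next
  case (Suc M)
  define c :: real where "c = fact (2*n+1) / fact n"
  have a: "S (Suc M) (Suc n) = (\<Sum>r<M+2. FF n (Suc M) r)" using S_FF[of "Suc M" n] by simp
  have b: "S M (Suc n) = (\<Sum>r<M+2. FF n M r)" by (rule S_FF2)
  have "(2 * real M + 2) * S (Suc M) (Suc n) = (2 * real M - 1) * S M (Suc n)"
    unfolding a b by (rule rec_sum)
  also have "\<dots> = (2 * real M - 1) * (c * PP M)" using Suc unfolding c_def by simp
  also have "\<dots> = c * ((2 * real M - 1) * PP M)" by (simp only: mult_ac)
  also have "\<dots> = c * ((2 * real M + 2) * PP (Suc M))" by (simp only: PP_rec)
  also have "\<dots> = (2 * real M + 2) * (c * PP (Suc M))" by (simp only: mult_ac)
  finally have "(2 * real M + 2) * S (Suc M) (Suc n) = (2 * real M + 2) * (c * PP (Suc M))" .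
  moreover have "2 * real M + 2 \<noteq> 0" by simp
  ultimately show ?case unfolding c_def by (metis mult_left_cancel)
qed

theorem lemma5:
  fixes m M :: nat
  assumes "m \<ge> 1" and "M \<ge> 1"
  shows "S M 1 = (\<Prod>k=1..M. 2 * real k - 3) / (fact M * 2 ^ M)
         \<and> S M m = fact (2*m - 1) / fact (m - 1) * S M 1
         \<and> S M m \<noteq> 0"
proof -
  obtain n where n: "m = Suc n" using assms(1) by (cases m) auto
  have s1: "S M 1 = PP M" using main[of M 0] by simp
  have nz: "PP M \<noteq> 0"
  proof -
    have k: "\<And>k::nat. 2 * real k - 3 \<noteq> 0"
    proof
      fix k :: nat assume "2 * real k - 3 = 0"
      then have "real (2 * k) = real (3::nat)" by simp
      then have "2 * k = 3" by (simp only: of_nat_eq_iff)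
      then show False by presburger
    qed
    have "(\<Prod>k=1..M. 2 * real k - 3) \<noteq> 0" using k by (simp add: prod_zero_iff)
    moreover have "(fact M * 2 ^ M :: real) \<noteq> 0" by simp
    ultimately show ?thesis unfolding PP_def by simp
  qed
  have e1: "2 * m - 1 = 2 * n + 1" using n by simp
  have e2: "m - 1 = n" using n by simp
  have sm: "S M m = fact (2*m - 1) / fact (m - 1) * S M 1"
    unfolding e1 e2 s1 unfolding n by (rule main)
  have "S M m \<noteq> 0" unfolding sm s1 e1 e2 using nz by simp
  then show ?thesis using s1 sm unfolding PP_def by blast
qed

end
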